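(* Consider an asynchronous execution of the Arrow protocol for a request set $R$ on a tree $T$, with requests indexed $r_0,r_1,\dots,r_{|R|-1}$ in the resulting queueing order. Let $i\in[1,|R|-1]$ and let $(u_0,u_1,\dots,u_s)$ be the tree path from $u_0=v_i$ (node of $r_i$) to $u_s=v_{i-1}$ (node of its predecessor $r_{i-1}$). Then for every node $u_k$ on this path, among the "find predecessor" messages of all requests $r_j$ with $j\in[i,|R|-1]$, the message of $r_i$ is the first one that reaches node $u_k$ (or is generated at $u_k$).
   Context: Requests $r=(v,t)$ are issued at node $v$ at time $t\ge0$; $r_0=(v_0,0)$ is a dummy request. Arrow protocol on a weighted tree $T$: each node $u$ stores a pointer $\mathrm{link}(u)$ (itself or a neighbour), initially pointing towards $v_0$ with $\mathrm{link}(v_0)=v_0$. When $r$ is issued at $v$: if $\mathrm{link}(v)=v$, $r$ is queued behind the previous request at $v$; otherwise atomically the "find predecessor" message $\mathrm{find}(r)$ is sent to $\mathrm{link}(v)$ and $\mathrm{link}(v):=v$. When $u$ receives $\mathrm{find}(r)$ from neighbour $w$: if $\mathrm{link}(u)=u$, atomically $r$ is queued directly behind the last request issued at $u$ and $\mathrm{link}(u):=w$; otherwise atomically $\mathrm{find}(r)$ is forwarded to $\mathrm{link}(u)$ and $\mathrm{link}(u):=w$. In an asynchronous execution message delays are arbitrary, each delay over edge $e$ being at most the weight of $e$. *)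

theory Defs
  imports Main "HOL.Real"
begin

definition spath :: "'v set \<Rightarrow> ('v \<Rightarrow> 'v \<Rightarrow> bool) \<Rightarrow> 'v list \<Rightarrow> 'v \<Rightarrow> 'v \<Rightarrow> bool" where
  "spath V E p u v \<longleftrightarrow> p \<noteq> [] \<and> hd p = u \<and> last p = v \<and> distinct p \<and> set p \<subseteq> V \<and>
     (\<forall>k. Suc k < length p \<longrightarrow> E (p ! k) (p ! Suc k))"

definition is_tree :: "'v set \<Rightarrow> ('v \<Rightarrow> 'v \<Rightarrow> bool) \<Rightarrow> bool" where
  "is_tree V E \<longleftrightarrow> finite V \<and> V \<noteq> {} \<and>
     (\<forall>u v. E u v \<longrightarrow> u \<in> V \<and> v \<in> V \<and> u \<noteq> v \<and> E v u) \<and>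
     (\<forall>u\<in>V. \<forall>v\<in>V. \<exists>!p. spath V E p u v)"

definition is_weight :: "('v \<Rightarrow> 'v \<Rightarrow> bool) \<Rightarrow> ('v \<Rightarrow> 'v \<Rightarrow> real) \<Rightarrow> bool" where
  "is_weight E wt \<longleftrightarrow> (\<forall>u v. E u v \<longrightarrow> wt u v > 0 \<and> wt u v = wt v u)"

definition init_links :: "'v set \<Rightarrow> ('v \<Rightarrow> 'v \<Rightarrow> bool) \<Rightarrow> 'v \<Rightarrow> ('v \<Rightarrow> 'v) \<Rightarrow> bool" where
  "init_links V E v0 l \<longleftrightarrow> l v0 = v0 \<and>
     (\<forall>u\<in>V - {v0}. \<exists>p. spath V E p u v0 \<and> l u = p ! 1)"

text \<open>Events: issuing request r (at its node), and node u receiving find(r) from neighbour w.\<close>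
datatype ('r, 'v) event = Issue 'r | Recv 'r 'v 'v

text \<open>Global state: link pointers, last request issued at each node, predecessor of each
  request in the queue, and the in-flight find message of each request
  (sender, receiver, sending time).\<close>
record ('v, 'r) st =
  lnk :: "'v \<Rightarrow> 'v"
  lst :: "'v \<Rightarrow> 'r option"
  prd :: "'r \<Rightarrow> 'r option"
  msgs :: "'r \<Rightarrow> ('v \<times> 'v \<times> real) option"

text \<open>One atomic step at time t (None if the step is not enabled).
  nd r / tm r are the node / issue time of request r, wt the edge weights (delay bounds).\<close>
fun step :: "('v \<Rightarrow> 'v \<Rightarrow> real) \<Rightarrow> ('r \<Rightarrow> 'v) \<Rightarrow> ('r \<Rightarrow> real) \<Rightarrow> ('v, 'r) st
              \<Rightarrow> ('r, 'v) event \<times> real \<Rightarrow> ('v, 'r) st option" where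
  "step wt nd tm s (Issue r, t) =
     (if t \<noteq> tm r then None
      else let v = nd r in
        if lnk s v = v then
          Some (s\<lparr>prd := (prd s)(r := lst s v), lst := (lst s)(v := Some r)\<rparr>)
        else
          Some (s\<lparr>msgs := (msgs s)(r := Some (v, lnk s v, t)),
                  lnk := (lnk s)(v := v), lst := (lst s)(v := Some r)\<rparr>))"
| "step wt nd tm s (Recv r w u, t) =
     (case msgs s r of
        None \<Rightarrow> None
      | Some (w', u', t0) \<Rightarrow>
          if w' \<noteq> w \<or> u' \<noteq> u \<or> t < t0 \<or> t > t0 + wt w u then None
          else if lnk s u = u then
            Some (s\<lparr>prd := (prd s)(r := lst s u), lnk := (lnk s)(u := w),
                    msgs := (msgs s)(r := None)\<rparr>)
          else
            Some (s\<lparr>msgs := (msgs s)(r := Some (u, lnk s u, t)), lnk := (lnk s)(u := w)\<rparr>))"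

fun run :: "('v \<Rightarrow> 'v \<Rightarrow> real) \<Rightarrow> ('r \<Rightarrow> 'v) \<Rightarrow> ('r \<Rightarrow> real) \<Rightarrow> ('v, 'r) st
             \<Rightarrow> (('r, 'v) event \<times> real) list \<Rightarrow> ('v, 'r) st option" where
  "run wt nd tm s [] = Some s"
| "run wt nd tm s (e # es) =
     (case step wt nd tm s e of None \<Rightarrow> None | Some s' \<Rightarrow> run wt nd tm s' es)"

definition init_state :: "('v \<Rightarrow> 'v) \<Rightarrow> 'v \<Rightarrow> 'r \<Rightarrow> ('v, 'r) st" where
  "init_state l v0 r0 = \<lparr>lnk = l, lst = (\<lambda>_. None)(v0 := Some r0),
                         prd = (\<lambda>_. None), msgs = (\<lambda>_. None)\<rparr>"

text \<open>A complete asynchronous execution (timed trace) of Arrow for request set R with dummy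
  request r0 at v0; sf is the final state (all messages delivered).\<close>
definition arrow_exec ::
  "'v set \<Rightarrow> ('v \<Rightarrow> 'v \<Rightarrow> bool) \<Rightarrow> ('v \<Rightarrow> 'v \<Rightarrow> real) \<Rightarrow> 'v \<Rightarrow> ('v \<Rightarrow> 'v) \<Rightarrow>
   'r set \<Rightarrow> 'r \<Rightarrow> ('r \<Rightarrow> 'v) \<Rightarrow> ('r \<Rightarrow> real) \<Rightarrow>
   (('r, 'v) event \<times> real) list \<Rightarrow> ('v, 'r) st \<Rightarrow> bool" where
  "arrow_exec V E wt v0 l R r0 nd tm tr sf \<longleftrightarrow>
     is_tree V E \<and> is_weight E wt \<and> v0 \<in> V \<and> init_links V E v0 l \<and>
     finite R \<and> r0 \<in> R \<and> nd r0 = v0 \<and> tm r0 = 0 \<and>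
     (\<forall>r\<in>R. nd r \<in> V \<and> tm r \<ge> 0) \<and>
     sorted (map snd tr) \<and> (\<forall>x\<in>set tr. snd x \<ge> 0) \<and>
     (\<forall>r. (\<exists>x\<in>set tr. fst x = Issue r) \<longrightarrow> r \<in> R - {r0}) \<and>
     (\<forall>r\<in>R - {r0}. card {k. k < length tr \<and> fst (tr ! k) = Issue r} = 1) \<and>
     run wt nd tm (init_state l v0 r0) tr = Some sf \<and>
     msgs sf = (\<lambda>_. None)"

fun visits :: "('r \<Rightarrow> 'v) \<Rightarrow> ('r, 'v) event \<Rightarrow> 'r \<Rightarrow> 'v \<Rightarrow> bool" where
  "visits nd (Issue r') r u \<longleftrightarrow> r' = r \<and> nd r = u"
| "visits nd (Recv r' w u') r u \<longleftrightarrow> r' = r \<and> u' = u"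

end

theory Submission
  imports Defs
begin


lemma run_append:
  "run wt nd tm s (xs @ ys) = (case run wt nd tm s xs of None \<Rightarrow> None | Some s' \<Rightarrow> run wt nd tm s' ys)"
  by (induction xs arbitrary: s) (auto split: option.split)

fun evreq :: "('r,'v) event \<Rightarrow> 'r" where
  "evreq (Issue r) = r" | "evreq (Recv r w u) = r"

fun evnode :: "('r \<Rightarrow> 'v) \<Rightarrow> ('r,'v) event \<Rightarrow> 'v" where
  "evnode nd (Issue r) = nd r" | "evnode nd (Recv r w u) = u"

lemma visits_iff: "visits nd e r x \<longleftrightarrow> evreq e = r \<and> evnode nd e = x"
  by (cases e) auto

lemma spath_tl:
  assumes "spath V E p u v" "u \<noteq> v"
  shows "spath V E (tl p) (p!1) v \<and> length p \<ge> 2"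
proof -
  have ne: "p \<noteq> []" and h: "hd p = u" and la: "last p = v" and d: "distinct p"
    and sV: "set p \<subseteq> V" and ed: "\<forall>k. Suc k < length p \<longrightarrow> E (p ! k) (p ! Suc k)"
    using assms(1) unfolding spath_def by auto
  have L: "length p \<ge> 2"
  proof (rule ccontr)
    assume "\<not> 2 \<le> length p"
    moreover have "length p \<noteq> 0" using ne by simp
    ultimately have "length p = 1" by linarith
    then have "hd p = last p" by (cases p) auto
    then show False using h la assms(2) by simp
  qed
  have tlne: "tl p \<noteq> []" using L by (cases p) auto
  moreover have "hd (tl p) = p ! 1" using L by (cases p; cases "tl p") auto
  moreover have "last (tl p) = v" using \<open>tl p \<noteq> []\<close> la last_tl by metis
  moreover have "distinct (tl p)" using d by (simp add: distinct_tl)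
  moreover have "set (tl p) \<subseteq> V" using sV by (cases p) auto
  moreover have "\<forall>k. Suc k < length (tl p) \<longrightarrow> E (tl p ! k) (tl p ! Suc k)"
    using ed by (simp add: nth_tl)
  ultimately show ?thesis unfolding spath_def using L by auto
qed

definition walkE :: "('v \<Rightarrow> 'v \<Rightarrow> bool) \<Rightarrow> 'v list \<Rightarrow> bool" where
  "walkE E ws \<longleftrightarrow> (\<forall>k. Suc k < length ws \<longrightarrow> E (ws ! k) (ws ! Suc k))"

definition nobt :: "'v list \<Rightarrow> bool" where
  "nobt ws \<longleftrightarrow> (\<forall>k. Suc (Suc k) < length ws \<longrightarrow> ws ! k \<noteq> ws ! Suc (Suc k))"

lemma walkE_Cons2: "walkE E (a # b # ws) \<longleftrightarrow> E a b \<and> walkE E (b # ws)"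
  unfolding walkE_def
  apply (rule iffI)
   apply (intro conjI allI impI)
    apply force
   apply (metis Suc_less_eq length_Cons nth_Cons_Suc)
  apply (intro allI impI)
  subgoal for k by (cases k) auto
  done

lemma walkE_single: "walkE E [a]" unfolding walkE_def by simp

lemma walkE_tl: "walkE E (a # ws) \<Longrightarrow> walkE E ws"
  unfolding walkE_def by (metis Suc_less_eq length_Cons nth_Cons_Suc)

lemma nobt_Cons3: "nobt (a # b # c # ws) \<longleftrightarrow> a \<noteq> c \<and> nobt (b # c # ws)"
  unfolding nobt_def
  apply (rule iffI)
   apply (intro conjI allI impI)
    apply force
   apply (metis Suc_less_eq length_Cons nth_Cons_Suc)
  apply (intro allI impI)
  subgoal for k by (cases k) auto
  done

lemma nobt_short: "length ws \<le> 2 \<Longrightarrow> nobt ws" unfolding nobt_def by auto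

lemma nobt_tl: "nobt (a # ws) \<Longrightarrow> nobt ws"
  unfolding nobt_def by (metis Suc_less_eq length_Cons nth_Cons_Suc)

locale ctx =
  fixes V :: "'v set" and E :: "'v \<Rightarrow> 'v \<Rightarrow> bool" and wt :: "'v \<Rightarrow> 'v \<Rightarrow> real"
    and v0 :: 'v and l :: "'v \<Rightarrow> 'v"
    and R :: "'r set" and r0 :: 'r and nd :: "'r \<Rightarrow> 'v" and tm :: "'r \<Rightarrow> real"
    and tr :: "(('r, 'v) event \<times> real) list" and sf :: "('v, 'r) st"
    and rs :: "nat \<Rightarrow> 'r"
  assumes exec: "arrow_exec V E wt v0 l R r0 nd tm tr sf"
    and bij: "bij_betw rs {0..<card R} R" and rs0: "rs 0 = r0"
    and ord: "\<forall>j\<in>{1..<card R}. prd sf (rs j) = Some (rs (j - 1))"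
begin

lemma tree: "is_tree V E" using exec unfolding arrow_exec_def by auto

lemma edge: "E x y \<Longrightarrow> x \<in> V \<and> y \<in> V \<and> x \<noteq> y \<and> E y x"
  using tree unfolding is_tree_def by blast

lemma E_irr: "\<not> E x x" using edge by blast

lemma uniq: "u \<in> V \<Longrightarrow> v \<in> V \<Longrightarrow> spath V E p u v \<Longrightarrow> spath V E q u v \<Longrightarrow> p = q"
  using tree unfolding is_tree_def by blast

lemma ex_path: "u \<in> V \<Longrightarrow> v \<in> V \<Longrightarrow> \<exists>p. spath V E p u v"
  using tree unfolding is_tree_def by blast

lemma v0V: "v0 \<in> V" and il: "init_links V E v0 l" and finR: "finite R" and r0R: "r0 \<in> R"
  and ndr0: "nd r0 = v0" and ndV: "r \<in> R \<Longrightarrow> nd r \<in> V"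
  and issc: "r \<in> R - {r0} \<Longrightarrow> card {k. k < length tr \<and> fst (tr ! k) = Issue r} = 1"
  and runok: "run wt nd tm (init_state l v0 r0) tr = Some sf"
  and msgsf: "msgs sf r = None"
  using exec unfolding arrow_exec_def by (auto simp: image_iff)

lemma issR: "x \<in> set tr \<Longrightarrow> fst x = Issue r \<Longrightarrow> r \<in> R - {r0}"
proof -
  assume a: "x \<in> set tr" "fst x = Issue r"
  have "\<forall>r. (\<exists>x\<in>set tr. fst x = Issue r) \<longrightarrow> r \<in> R - {r0}" using exec unfolding arrow_exec_def by blast
  then show ?thesis using a by blast
qed

lemma issR': "n < length tr \<Longrightarrow> fst (tr ! n) = Issue r \<Longrightarrow> r \<in> R - {r0}"
  using issR[of "tr!n" r] by (metis nth_mem)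

lemma iss_unique:
  assumes "n < length tr" "fst (tr ! n) = Issue r" "m < length tr" "fst (tr ! m) = Issue r"
  shows "n = m"
proof -
  have "r \<in> R - {r0}" using issR' assms by blast
  then have c: "card {k. k < length tr \<and> fst (tr ! k) = Issue r} = 1" by (rule issc)
  then obtain z where "{k. k < length tr \<and> fst (tr ! k) = Issue r} = {z}" using card_1_singletonE by blast
  then have "n \<in> {z}" "m \<in> {z}" using assms by (metis (mono_tags, lifting) mem_Collect_eq)+
  then show ?thesis by simp
qed

definition S :: "nat \<Rightarrow> ('v, 'r) st" where
  "S n = the (run wt nd tm (init_state l v0 r0) (take n tr))"

lemma run_take: "run wt nd tm (init_state l v0 r0) (take n tr) = Some (S n)"
proof -
  have "run wt nd tm (init_state l v0 r0) (take n tr @ drop n tr) = Some sf" using runok by simp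
  then have "run wt nd tm (init_state l v0 r0) (take n tr) \<noteq> None"
    unfolding run_append by (auto split: option.splits)
  then show ?thesis unfolding S_def by auto
qed

lemma S0: "S 0 = init_state l v0 r0" using run_take[of 0] by simp

lemma Sfin: "S (length tr) = sf" using run_take[of "length tr"] runok by simp

lemma S_step: "n < length tr \<Longrightarrow> step wt nd tm (S n) (tr ! n) = Some (S (Suc n))"
proof -
  assume n: "n < length tr"
  have "run wt nd tm (init_state l v0 r0) (take n tr @ [tr ! n]) = Some (S (Suc n))"
    using run_take[of "Suc n"] n by (simp add: take_Suc_conv_app_nth)
  then show ?thesis using run_take[of n] by (auto simp: run_append split: option.splits)
qed


lemma step_cases:
  assumes "step wt nd tm s (e, t) = Some s'"
  shows "(\<exists>g. e = Issue g \<and> lnk s (nd g) = nd g \<and>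
          s' = s\<lparr>prd := (prd s)(g := lst s (nd g)), lst := (lst s)(nd g := Some g)\<rparr>) \<or>
   (\<exists>g. e = Issue g \<and> lnk s (nd g) \<noteq> nd g \<and>
          s' = s\<lparr>msgs := (msgs s)(g := Some (nd g, lnk s (nd g), t)), lnk := (lnk s)(nd g := nd g),
                  lst := (lst s)(nd g := Some g)\<rparr>) \<or>
   (\<exists>g w u t0. e = Recv g w u \<and> msgs s g = Some (w, u, t0) \<and> lnk s u = u \<and>
          s' = s\<lparr>prd := (prd s)(g := lst s u), lnk := (lnk s)(u := w), msgs := (msgs s)(g := None)\<rparr>) \<or>
   (\<exists>g w u t0. e = Recv g w u \<and> msgs s g = Some (w, u, t0) \<and> lnk s u \<noteq> u \<and>
          s' = s\<lparr>msgs := (msgs s)(g := Some (u, lnk s u, t)), lnk := (lnk s)(u := w)\<rparr>)"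
  using assms by (cases e) (auto simp: Let_def split: if_splits option.splits)

definition Inv :: "('v, 'r) st \<Rightarrow> bool" where
  "Inv s \<longleftrightarrow>
    (\<forall>x\<in>V. lnk s x \<noteq> x \<longrightarrow> E x (lnk s x) \<and> lnk s (lnk s x) \<noteq> x) \<and>
    (\<forall>r a y t. msgs s r = Some (a, y, t) \<longrightarrow> E a y \<and> lnk s y \<noteq> a \<and> lnk s a \<noteq> y \<and> r \<in> R - {r0}) \<and>
    (\<forall>r r' a y t b z t'. msgs s r = Some (a, y, t) \<longrightarrow> msgs s r' = Some (b, z, t') \<longrightarrow> r \<noteq> r' \<longrightarrow>
        \<not> ((a = b \<and> y = z) \<or> (a = z \<and> y = b))) \<and>
    (\<forall>x\<in>V. lnk s x = x \<longrightarrow> lst s x \<noteq> None) \<and>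
    (\<forall>x g. lst s x = Some g \<longrightarrow> nd g = x \<and> g \<in> R)"

lemma init_link_facts:
  assumes "x \<in> V"
  shows "(l x = x \<longrightarrow> x = v0) \<and> (l x \<noteq> x \<longrightarrow> E x (l x) \<and> l (l x) \<noteq> x)"
proof (cases "x = v0")
  case True
  then show ?thesis using il unfolding init_links_def by auto
next
  case False
  then obtain p where p: "spath V E p x v0" "l x = p ! 1" using il assms unfolding init_links_def by blast
  from spath_tl[OF p(1) False] have tlp: "spath V E (tl p) (p ! 1) v0" and L: "length p \<ge> 2" by auto
  have d: "distinct p" and h: "hd p = x" and ed: "E (p!0) (p!1)"
    using p(1) L unfolding spath_def by auto
  have p0: "p ! 0 = x" using h L by (cases p) auto
  have ne: "p ! 1 \<noteq> x" using d L p0 by (metis distinct_conv_nth le_trans one_le_numeral one_less_numeral_iff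
      semiring_norm(76) zero_less_one less_le_trans zero_neq_one)
  have lx: "l (l x) \<noteq> x"
  proof (cases "p ! 1 = v0")
    case True
    then show ?thesis using il p(2) False unfolding init_links_def by auto
  next
    case F2: False
    have y: "p ! 1 \<in> V" using tlp unfolding spath_def by (metis hd_in_set subset_iff)
    then obtain q where q: "spath V E q (p!1) v0" "l (p!1) = q ! 1" using il F2 unfolding init_links_def by blast
    have "q = tl p" using uniq[OF y v0V q(1) tlp] .
    then have "l (p!1) = p ! 2" using q(2) spath_tl[OF tlp F2] by (auto simp: nth_tl numeral_2_eq_2)
    moreover have "length p \<ge> 3" using spath_tl[OF tlp F2] by simp linarith
    moreover have "p ! 2 \<noteq> p ! 0"
    proof -
      have "\<forall>i<length p. \<forall>j<length p. i \<noteq> j \<longrightarrow> p ! i \<noteq> p ! j" using d distinct_conv_nth by blast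
      moreover have "2 < length p" "0 < length p" using \<open>length p \<ge> 3\<close> by linarith+
      ultimately show ?thesis by (metis zero_neq_numeral)
    qed
    ultimately show ?thesis using p0 p(2) by simp
  qed
  show ?thesis using ne ed p0 p(2) lx by auto
qed

lemma Inv0: "Inv (init_state l v0 r0)"
  using init_link_facts ndr0 r0R unfolding Inv_def init_state_def by auto


end



context ctx
begin

lemma Inv_unfold:
  assumes "Inv s"
  shows "\<forall>x\<in>V. lnk s x \<noteq> x \<longrightarrow> E x (lnk s x) \<and> lnk s (lnk s x) \<noteq> x"
   and "\<forall>r a y t. msgs s r = Some (a, y, t) \<longrightarrow> E a y \<and> lnk s y \<noteq> a \<and> lnk s a \<noteq> y \<and> r \<in> R - {r0}"
   and "\<forall>r r' a y t b z t'. msgs s r = Some (a, y, t) \<longrightarrow> msgs s r' = Some (b, z, t') \<longrightarrow> r \<noteq> r' \<longrightarrow>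
        \<not> ((a = b \<and> y = z) \<or> (a = z \<and> y = b))"
   and "\<forall>x\<in>V. lnk s x = x \<longrightarrow> lst s x \<noteq> None"
   and "\<forall>x g. lst s x = Some g \<longrightarrow> nd g = x \<and> g \<in> R"
  using assms unfolding Inv_def by blast+

lemma Inv_intro:
  assumes "\<And>x. x \<in> V \<Longrightarrow> lnk s x \<noteq> x \<Longrightarrow> E x (lnk s x) \<and> lnk s (lnk s x) \<noteq> x"
   and "\<And>r a y t. msgs s r = Some (a, y, t) \<Longrightarrow> E a y \<and> lnk s y \<noteq> a \<and> lnk s a \<noteq> y \<and> r \<in> R - {r0}"
   and "\<And>r r' a y t b z t'. msgs s r = Some (a, y, t) \<Longrightarrow> msgs s r' = Some (b, z, t') \<Longrightarrow> r \<noteq> r' \<Longrightarrow>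
        \<not> ((a = b \<and> y = z) \<or> (a = z \<and> y = b))"
   and "\<And>x. x \<in> V \<Longrightarrow> lnk s x = x \<Longrightarrow> lst s x \<noteq> None"
   and "\<And>x g. lst s x = Some g \<Longrightarrow> nd g = x \<and> g \<in> R"
  shows "Inv s"
  using assms unfolding Inv_def by blast

lemma pw_upd:
  assumes old: "\<And>r r' a y t b z t'. msgs s r = Some (a, y, t) \<Longrightarrow> msgs s r' = Some (b, z, t') \<Longrightarrow> r \<noteq> r' \<Longrightarrow>
        \<not> ((a = b \<and> y = z) \<or> (a = z \<and> y = b))"
    and new: "\<And>a y t r' b z t'. M = Some (a, y, t) \<Longrightarrow> msgs s r' = Some (b, z, t') \<Longrightarrow> r' \<noteq> g \<Longrightarrow>
        \<not> ((a = b \<and> y = z) \<or> (a = z \<and> y = b))"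
    and m1: "((msgs s)(g := M)) r = Some (a, y, t)" and m2: "((msgs s)(g := M)) r' = Some (b, z, t')"
    and ne: "r \<noteq> r'"
  shows "\<not> ((a = b \<and> y = z) \<or> (a = z \<and> y = b))"
proof (cases "r = g")
  case True
  then have "r' \<noteq> g" using ne by simp
  then show ?thesis using new[of a y t r' b z t'] m1 m2 True by auto
next
  case False
  show ?thesis
  proof (cases "r' = g")
    case True
    then show ?thesis using new[of b z t' r a y t] m1 m2 False by auto
  next
    case F2: False
    then show ?thesis using old[of r a y t r' b z t'] m1 m2 False ne by auto
  qed
qed

lemma Inv_iss1:
  assumes I: "Inv s" and g: "g \<in> R - {r0}" and sk: "lnk s (nd g) = nd g"
  shows "Inv (s\<lparr>prd := (prd s)(g := lst s (nd g)), lst := (lst s)(nd g := Some g)\<rparr>)"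
  using I g unfolding Inv_def by auto

lemma Inv_iss2:
  assumes I: "Inv s" and g: "g \<in> R - {r0}" and sk: "lnk s (nd g) \<noteq> nd g"
  shows "Inv (s\<lparr>msgs := (msgs s)(g := Some (nd g, lnk s (nd g), t)), lnk := (lnk s)(nd g := nd g),
                  lst := (lst s)(nd g := Some g)\<rparr>)" (is "Inv ?s")
proof -
  let ?v = "nd g" let ?y = "lnk s (nd g)"
  note J = Inv_unfold[OF I]
  have v: "?v \<in> V" using g ndV by blast
  have Evy: "E ?v ?y" and yv: "lnk s ?y \<noteq> ?v" using J(1) v sk by auto
  have yV: "?y \<in> V" and vy: "?v \<noteq> ?y" using edge[OF Evy] by auto
  show ?thesis
  proof (rule Inv_intro)
    fix x assume x: "x \<in> V" "lnk ?s x \<noteq> x"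
    then have xv: "x \<noteq> ?v" by auto
    then have "E x (lnk s x) \<and> lnk s (lnk s x) \<noteq> x" using J(1) x by auto
    then show "E x (lnk ?s x) \<and> lnk ?s (lnk ?s x) \<noteq> x" using xv by auto
  next
    fix r a y t' assume m: "msgs ?s r = Some (a, y, t')"
    show "E a y \<and> lnk ?s y \<noteq> a \<and> lnk ?s a \<noteq> y \<and> r \<in> R - {r0}"
    proof (cases "r = g")
      case True
      then show ?thesis using m Evy yv vy g by auto
    next
      case False
      then have m': "msgs s r = Some (a, y, t')" using m by simp
      then have h: "E a y \<and> lnk s y \<noteq> a \<and> lnk s a \<noteq> y \<and> r \<in> R - {r0}" using J(2) by blast
      then have "a \<noteq> y" using edge by blast
      then show ?thesis using h by auto
    qed
  next
    fix r r' a y t1 b z t2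
    assume m1: "msgs ?s r = Some (a, y, t1)" and m2: "msgs ?s r' = Some (b, z, t2)" and ne: "r \<noteq> r'"
    show "\<not> ((a = b \<and> y = z) \<or> (a = z \<and> y = b))"
    proof (rule pw_upd[of s _ g, OF _ _ _ _ ne])
      show "((msgs s)(g := Some (nd g, lnk s (nd g), t))) r = Some (a, y, t1)" using m1 by simp
      show "((msgs s)(g := Some (nd g, lnk s (nd g), t))) r' = Some (b, z, t2)" using m2 by simp
    next
      fix r r' a y t b z t'
      assume "msgs s r = Some (a, y, t)" "msgs s r' = Some (b, z, t')" "r \<noteq> r'"
      then show "\<not> ((a = b \<and> y = z) \<or> (a = z \<and> y = b))" using J(3) by blast
    next
      fix a y t0 r' b z t'
      assume "Some (nd g, lnk s (nd g), t) = Some (a, y, t0)" "msgs s r' = Some (b, z, t')"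
      then show "\<not> ((a = b \<and> y = z) \<or> (a = z \<and> y = b))" using J(2) by fastforce
    qed
  next
    fix x assume "x \<in> V" "lnk ?s x = x"
    then show "lst ?s x \<noteq> None" using J(4) by auto
  next
    fix x g' assume "lst ?s x = Some g'"
    then show "nd g' = x \<and> g' \<in> R" using J(5) g by (auto split: if_splits)
  qed
qed

lemma Inv_rcv1:
  assumes I: "Inv s" and mg: "msgs s g = Some (w, u, t0)" and sk: "lnk s u = u"
  shows "Inv (s\<lparr>prd := (prd s)(g := lst s u), lnk := (lnk s)(u := w), msgs := (msgs s)(g := None)\<rparr>)"
    (is "Inv ?s")
proof -
  note J = Inv_unfold[OF I]
  have Ewu: "E w u" and ne: "lnk s w \<noteq> u" using J(2) mg by blast+
  have Euw: "E u w" and uw: "u \<noteq> w" using edge[OF Ewu] by auto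
  have oth: "\<And>r' b z t'. msgs s r' = Some (b, z, t') \<Longrightarrow> r' \<noteq> g \<Longrightarrow> \<not> ((w = b \<and> u = z) \<or> (w = z \<and> u = b))"
    using J(3) mg by blast
  show ?thesis
  proof (rule Inv_intro)
    fix x assume x: "x \<in> V" "lnk ?s x \<noteq> x"
    show "E x (lnk ?s x) \<and> lnk ?s (lnk ?s x) \<noteq> x"
    proof (cases "x = u")
      case True
      then show ?thesis using Euw ne uw by auto
    next
      case False
      then have h: "E x (lnk s x) \<and> lnk s (lnk s x) \<noteq> x" using J(1) x by auto
      have "lnk s x \<noteq> u \<or> x \<noteq> w" using ne by auto
      then show ?thesis using h False sk by auto
    qed
  next
    fix r a y t' assume m: "msgs ?s r = Some (a, y, t')"
    then have rg: "r \<noteq> g" and m': "msgs s r = Some (a, y, t')" by (auto split: if_splits)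
    then have h: "E a y \<and> lnk s y \<noteq> a \<and> lnk s a \<noteq> y \<and> r \<in> R - {r0}" using J(2) by blast
    have "\<not> ((w = a \<and> u = y) \<or> (w = y \<and> u = a))" using oth[OF m' rg] .
    then show "E a y \<and> lnk ?s y \<noteq> a \<and> lnk ?s a \<noteq> y \<and> r \<in> R - {r0}" using h by auto
  next
    fix r r' a y t1 b z t2
    assume m1: "msgs ?s r = Some (a, y, t1)" and m2: "msgs ?s r' = Some (b, z, t2)" and ne: "r \<noteq> r'"
    then have "msgs s r = Some (a, y, t1)" "msgs s r' = Some (b, z, t2)" by (auto split: if_splits)
    then show "\<not> ((a = b \<and> y = z) \<or> (a = z \<and> y = b))" using J(3) ne by blast
  next
    fix x assume "x \<in> V" "lnk ?s x = x"
    then show "lst ?s x \<noteq> None" using J(4) uw by (auto split: if_splits)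
  next
    fix x g' assume "lst ?s x = Some g'"
    then show "nd g' = x \<and> g' \<in> R" using J(5) by auto
  qed
qed

lemma Inv_rcv2:
  assumes I: "Inv s" and mg: "msgs s g = Some (w, u, t0)" and sk: "lnk s u \<noteq> u"
  shows "Inv (s\<lparr>msgs := (msgs s)(g := Some (u, lnk s u, t)), lnk := (lnk s)(u := w)\<rparr>)"
    (is "Inv ?s")
proof -
  note J = Inv_unfold[OF I]
  let ?x = "lnk s u"
  have Ewu: "E w u" and ne: "lnk s w \<noteq> u" and uw': "?x \<noteq> w" and gR: "g \<in> R - {r0}"
    using J(2) mg by blast+
  have Euw: "E u w" and uw: "u \<noteq> w" and uV: "u \<in> V" using edge[OF Ewu] by auto
  have Eux: "E u ?x" and xu: "lnk s ?x \<noteq> u" using J(1) uV sk by blast+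
  have ux: "u \<noteq> ?x" using sk by simp
  have oth: "\<And>r' b z t'. msgs s r' = Some (b, z, t') \<Longrightarrow> r' \<noteq> g \<Longrightarrow> \<not> ((w = b \<and> u = z) \<or> (w = z \<and> u = b))"
    using J(3) mg by blast
  show ?thesis
  proof (rule Inv_intro)
    fix x assume x: "x \<in> V" "lnk ?s x \<noteq> x"
    show "E x (lnk ?s x) \<and> lnk ?s (lnk ?s x) \<noteq> x"
    proof (cases "x = u")
      case True
      then show ?thesis using Euw ne uw by auto
    next
      case False
      then have h: "E x (lnk s x) \<and> lnk s (lnk s x) \<noteq> x" using J(1) x by auto
      have "lnk s x \<noteq> u \<or> x \<noteq> w" using ne by auto
      then show ?thesis using h False by auto
    qed
  next
    fix r a y t' assume m: "msgs ?s r = Some (a, y, t')"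
    show "E a y \<and> lnk ?s y \<noteq> a \<and> lnk ?s a \<noteq> y \<and> r \<in> R - {r0}"
    proof (cases "r = g")
      case True
      then have "a = u" "y = ?x" using m by auto
      then show ?thesis using Eux xu ux uw' gR True by auto
    next
      case rg: False
      then have m': "msgs s r = Some (a, y, t')" using m by simp
      then have h: "E a y \<and> lnk s y \<noteq> a \<and> lnk s a \<noteq> y \<and> r \<in> R - {r0}" using J(2) by blast
      have "\<not> ((w = a \<and> u = y) \<or> (w = y \<and> u = a))" using oth[OF m' rg] .
      then show ?thesis using h by auto
    qed
  next
    fix r r' a y t1 b z t2
    assume m1: "msgs ?s r = Some (a, y, t1)" and m2: "msgs ?s r' = Some (b, z, t2)" and ne: "r \<noteq> r'"
    show "\<not> ((a = b \<and> y = z) \<or> (a = z \<and> y = b))"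
    proof (rule pw_upd[of s _ g, OF _ _ _ _ ne])
      show "((msgs s)(g := Some (u, lnk s u, t))) r = Some (a, y, t1)" using m1 by simp
      show "((msgs s)(g := Some (u, lnk s u, t))) r' = Some (b, z, t2)" using m2 by simp
    next
      fix r r' a y t b z t'
      assume "msgs s r = Some (a, y, t)" "msgs s r' = Some (b, z, t')" "r \<noteq> r'"
      then show "\<not> ((a = b \<and> y = z) \<or> (a = z \<and> y = b))" using J(3) by blast
    next
      fix a y t0 r' b z t'
      assume "Some (u, lnk s u, t) = Some (a, y, t0)" "msgs s r' = Some (b, z, t')"
      then show "\<not> ((a = b \<and> y = z) \<or> (a = z \<and> y = b))" using J(2) sk by fastforce
    qed
  next
    fix x assume "x \<in> V" "lnk ?s x = x"
    then show "lst ?s x \<noteq> None" using J(4) uw by (auto split: if_splits)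
  next
    fix x g' assume "lst ?s x = Some g'"
    then show "nd g' = x \<and> g' \<in> R" using J(5) by auto
  qed
qed

lemma Inv_step:
  assumes I: "Inv s" and st: "step wt nd tm s (e, t) = Some s'" and iss: "\<forall>g. e = Issue g \<longrightarrow> g \<in> R - {r0}"
  shows "Inv s'"
  using step_cases[OF st]
proof (elim disjE exE conjE)
  fix g assume "e = Issue g" "lnk s (nd g) = nd g"
    "s' = s\<lparr>prd := (prd s)(g := lst s (nd g)), lst := (lst s)(nd g := Some g)\<rparr>"
  then show ?thesis using Inv_iss1[OF I] iss by simp
next
  fix g assume "e = Issue g" "lnk s (nd g) \<noteq> nd g"
    "s' = s\<lparr>msgs := (msgs s)(g := Some (nd g, lnk s (nd g), t)), lnk := (lnk s)(nd g := nd g),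
                  lst := (lst s)(nd g := Some g)\<rparr>"
  then show ?thesis using Inv_iss2[OF I] iss by simp
next
  fix g w u t0 assume "e = Recv g w u" "msgs s g = Some (w, u, t0)" "lnk s u = u"
    "s' = s\<lparr>prd := (prd s)(g := lst s u), lnk := (lnk s)(u := w), msgs := (msgs s)(g := None)\<rparr>"
  then show ?thesis using Inv_rcv1[OF I] by simp
next
  fix g w u t0 assume "e = Recv g w u" "msgs s g = Some (w, u, t0)" "lnk s u \<noteq> u"
    "s' = s\<lparr>msgs := (msgs s)(g := Some (u, lnk s u, t)), lnk := (lnk s)(u := w)\<rparr>"
  then show ?thesis using Inv_rcv2[OF I] by simp
qed

lemma S_step': "n < length tr \<Longrightarrow> step wt nd tm (S n) (fst (tr ! n), snd (tr ! n)) = Some (S (Suc n))"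
  using S_step by simp

lemma Inv_S: "n \<le> length tr \<Longrightarrow> Inv (S n)"
proof (induction n)
  case 0
  then show ?case using Inv0 S0 by simp
next
  case (Suc n)
  have "n < length tr" using Suc by simp
  then show ?case using Inv_step[OF Suc.IH[OF Suc_leD[OF Suc.prems]] S_step'[of n]] issR' by blast
qed

end



context ctx
begin

lemma step_other:
  assumes "step wt nd tm s (e, t) = Some s'"
  shows "evreq e \<noteq> r \<Longrightarrow> prd s' r = prd s r \<and> msgs s' r = msgs s r"
    and "x \<noteq> evnode nd e \<Longrightarrow> lnk s' x = lnk s x \<and> lst s' x = lst s x"
  using step_cases[OF assms] by auto

lemma msgs_issued: "n \<le> length tr \<Longrightarrow> msgs (S n) r \<noteq> None \<Longrightarrow> \<exists>q<n. fst (tr ! q) = Issue r"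
proof (induction n)
  case 0
  then show ?case using S0 by (simp add: init_state_def)
next
  case (Suc n)
  have st: "step wt nd tm (S n) (fst (tr ! n), snd (tr ! n)) = Some (S (Suc n))" using S_step' Suc by simp
  show ?case
  proof (cases "evreq (fst (tr ! n)) = r")
    case False
    then show ?thesis using step_other(1)[OF st] Suc by (metis Suc_leD less_Suc_eq)
  next
    case True
    show ?thesis
    proof (cases "fst (tr ! n)")
      case (Issue g)
      then show ?thesis using True by auto
    next
      case (Recv g w u)
      then have "msgs (S n) r \<noteq> None" using step_cases[OF st] True by auto
      then show ?thesis using Suc by (metis Suc_leD less_Suc_eq)
    qed
  qed
qed

lemma msgs_const:
  "n \<le> m \<Longrightarrow> m \<le> length tr \<Longrightarrow> (\<forall>q. n \<le> q \<and> q < m \<longrightarrow> evreq (fst (tr ! q)) \<noteq> r) \<Longrightarrow>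
   msgs (S m) r = msgs (S n) r"
proof (induction m)
  case 0
  then show ?case by simp
next
  case (Suc m)
  show ?case
  proof (cases "n = Suc m")
    case False
    then have "n \<le> m" using Suc by simp
    then show ?thesis using Suc step_other(1)[OF S_step'[of m]] by auto
  qed simp
qed

lemma arrival:
  assumes n: "n \<le> length tr" and ms: "msgs (S n) r = Some (a, y, t)"
  shows "\<exists>m. n \<le> m \<and> m < length tr \<and> fst (tr ! m) = Recv r a y \<and> msgs (S m) r = Some (a, y, t)"
proof -
  have ex: "\<exists>m. n \<le> m \<and> m < length tr \<and> evreq (fst (tr ! m)) = r"
  proof (rule ccontr)
    assume "\<not> ?thesis"
    then have "msgs (S (length tr)) r = msgs (S n) r" using msgs_const[OF n] by auto
    then show False using ms Sfin msgsf by simp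
  qed
  define m where "m = (LEAST m. n \<le> m \<and> m < length tr \<and> evreq (fst (tr ! m)) = r)"
  have m: "n \<le> m \<and> m < length tr \<and> evreq (fst (tr ! m)) = r" unfolding m_def using LeastI_ex[OF ex] .
  have "\<forall>q. n \<le> q \<and> q < m \<longrightarrow> evreq (fst (tr ! q)) \<noteq> r"
  proof (intro allI impI)
    fix q assume q: "n \<le> q \<and> q < m"
    show "evreq (fst (tr ! q)) \<noteq> r"
    proof
      assume "evreq (fst (tr ! q)) = r"
      then have "m \<le> q" unfolding m_def using q m by (intro Least_le) simp
      then show False using q by simp
    qed
  qed
  then have mm: "msgs (S m) r = Some (a, y, t)" using msgs_const m ms by auto
  show ?thesis
  proof (cases "fst (tr ! m)")
    case (Issue g)
    then have g: "g = r" using m by simp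
    obtain q where q: "q < n" "fst (tr ! q) = Issue r" using msgs_issued[OF n] ms by blast
    have "q = m" using iss_unique[of q r m] q m Issue g n by simp
    then show ?thesis using q m by simp
  next
    case (Recv g w u)
    then have "g = r" using m by simp
    then have "w = a \<and> u = y" using step_cases[OF S_step'[of m]] m Recv mm by auto
    then show ?thesis using m mm Recv \<open>g = r\<close> by auto
  qed
qed

lemma prd_stable:
  assumes m: "Suc m \<le> length tr" and none: "msgs (S (Suc m)) r = None"
    and iq: "\<exists>q\<le>m. fst (tr ! q) = Issue r"
  shows "prd sf r = prd (S (Suc m)) r"
proof -
  have "\<forall>n. Suc m \<le> n \<and> n \<le> length tr \<longrightarrow> msgs (S n) r = None \<and> prd (S n) r = prd (S (Suc m)) r"
  proof (intro allI impI)
    fix n assume "Suc m \<le> n \<and> n \<le> length tr"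
    then show "msgs (S n) r = None \<and> prd (S n) r = prd (S (Suc m)) r"
    proof (induction n)
      case 0
      then show ?case by simp
    next
      case (Suc n)
      show ?case
      proof (cases "Suc m = Suc n")
        case False
        then have IH: "msgs (S n) r = None \<and> prd (S n) r = prd (S (Suc m)) r" using Suc by simp
        have nl: "n < length tr" using Suc by simp
        note st = S_step'[OF nl]
        show ?thesis
        proof (cases "evreq (fst (tr ! n)) = r")
          case False
          then show ?thesis using step_other(1)[OF st] IH by simp
        next
          case True
          show ?thesis
          proof (cases "fst (tr ! n)")
            case (Issue g)
            then obtain q where "q \<le> m" "fst (tr ! q) = Issue r" using iq by blast
            moreover have "n = q" using iss_unique[of n r q] Issue True calculation nl m by simp
            ultimately show ?thesis using False Suc by simp
          next
            case (Recv g w u)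
            then show ?thesis using step_cases[OF st] True IH by auto
          qed
        qed
      qed (use none in simp)
    qed
  qed
  then have "prd (S (length tr)) r = prd (S (Suc m)) r" using m by blast
  then show ?thesis using Sfin by simp
qed


definition pos :: "'r \<Rightarrow> nat" where "pos r = inv_into {0..<card R} rs r"

lemma pos_rs: "j < card R \<Longrightarrow> pos (rs j) = j"
  unfolding pos_def using bij bij_betw_inv_into_left by fastforce

lemma rs_pos: "r \<in> R \<Longrightarrow> rs (pos r) = r \<and> pos r < card R"
proof -
  assume r: "r \<in> R"
  have img: "rs ` {0..<card R} = R" using bij by (simp add: bij_betw_def)
  have "r \<in> rs ` {0..<card R}" using img r by simp
  then have "inv_into {0..<card R} rs r \<in> {0..<card R}" "rs (inv_into {0..<card R} rs r) = r"
    by (rule inv_into_into, rule f_inv_into_f)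
  then show ?thesis unfolding pos_def by simp
qed

lemma cardR: "card R \<ge> 1" using finR r0R by (metis One_nat_def Suc_leI card_gt_0_iff empty_iff)

lemma pos_r0: "pos r0 = 0" using pos_rs[of 0] rs0 cardR by simp

lemma pos_prd:
  assumes r: "r \<in> R - {r0}" and p: "prd sf r = Some l'"
  shows "pos r \<ge> 1 \<and> pos l' = pos r - 1"
proof -
  have a: "rs (pos r) = r" "pos r < card R" using rs_pos r by auto
  have "pos r \<noteq> 0"
  proof
    assume "pos r = 0"
    then have "r = r0" using a(1) rs0 by metis
    then show False using r by simp
  qed
  then have "prd sf r = Some (rs (pos r - 1))" using ord a by (metis One_nat_def Suc_leI atLeastLessThan_iff not_gr_zero)
  then have "l' = rs (pos r - 1)" using p by simp
  then show ?thesis using pos_rs a \<open>pos r \<noteq> 0\<close> by simp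
qed

primrec LVf :: "nat \<Rightarrow> 'v \<Rightarrow> 'r" where
  "LVf 0 x = r0"
| "LVf (Suc n) x = (if n < length tr \<and> evnode nd (fst (tr ! n)) = x then evreq (fst (tr ! n)) else LVf n x)"

end



locale capped = ctx V E wt v0 l R r0 nd tm tr sf rs
  for V :: "'v set" and E :: "'v \<Rightarrow> 'v \<Rightarrow> bool" and wt :: "'v \<Rightarrow> 'v \<Rightarrow> real"
    and v0 :: 'v and l :: "'v \<Rightarrow> 'v"
    and R :: "'r set" and r0 :: 'r and nd :: "'r \<Rightarrow> 'v" and tm :: "'r \<Rightarrow> real"
    and tr :: "(('r, 'v) event \<times> real) list" and sf :: "('v, 'r) st"
    and rs :: "nat \<Rightarrow> 'r" +
  fixes c :: nat
  assumes IH: "\<forall>q<length tr. pos (evreq (fst (tr ! q))) < c \<longrightarrow>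
                 pos (LVf q (evnode nd (fst (tr ! q)))) < pos (evreq (fst (tr ! q)))"
begin

definition mu :: "nat \<Rightarrow> 'v \<Rightarrow> nat" where "mu n x = min (pos (LVf n x)) c"

lemma mono1: "mu n x \<le> mu (Suc n) x"
proof (cases "n < length tr \<and> evnode nd (fst (tr ! n)) = x")
  case True
  then have e: "LVf (Suc n) x = evreq (fst (tr ! n))" by simp
  show ?thesis
  proof (cases "pos (evreq (fst (tr ! n))) < c")
    case True
    then have "pos (LVf n x) < pos (evreq (fst (tr ! n)))" using IH \<open>n < length tr \<and> evnode nd (fst (tr ! n)) = x\<close> by blast
    then show ?thesis using e unfolding mu_def by simp
  next
    case False
    then show ?thesis using e unfolding mu_def by simp
  qed
next
  case False
  then have "LVf (Suc n) x = LVf n x" by auto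
  then show ?thesis unfolding mu_def by simp
qed

lemma mono: "n \<le> n' \<Longrightarrow> mu n x \<le> mu n' x"
  by (induction n' rule: dec_induct) (use mono1 le_trans in blast)+


definition CInv :: "nat \<Rightarrow> bool" where
  "CInv n \<longleftrightarrow>
    (\<forall>x\<in>V. lnk (S n) x = x \<longrightarrow> (\<exists>l'. lst (S n) x = Some l' \<and> pos (LVf n x) \<le> pos l')) \<and>
    (\<forall>x\<in>V. lnk (S n) x \<noteq> x \<longrightarrow> mu n x \<le> mu n (lnk (S n) x)) \<and>
    (\<forall>r a y t. msgs (S n) r = Some (a, y, t) \<longrightarrow> min (pos r) c \<le> mu n a)"

lemma CInv0: "CInv 0"
  unfolding CInv_def using S0 Inv_S[of 0] pos_r0 unfolding init_state_def Inv_def mu_def by auto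

lemma LV_Suc: "n < length tr \<Longrightarrow> LVf (Suc n) x = (if evnode nd (fst (tr ! n)) = x then evreq (fst (tr ! n)) else LVf n x)"
  by simp

lemma CInv_step:
  assumes n: "n < length tr" and C: "CInv n"
  shows "CInv (Suc n)"
proof -
  note st = S_step'[OF n]
  note I = Inv_unfold[OF Inv_S[OF less_imp_le[OF n]]]
  have C1: "\<forall>x\<in>V. lnk (S n) x = x \<longrightarrow> (\<exists>l'. lst (S n) x = Some l' \<and> pos (LVf n x) \<le> pos l')"
   and C2: "\<forall>x\<in>V. lnk (S n) x \<noteq> x \<longrightarrow> mu n x \<le> mu n (lnk (S n) x)"
   and C3: "\<forall>r a y t. msgs (S n) r = Some (a, y, t) \<longrightarrow> min (pos r) c \<le> mu n a"
    using C unfolding CInv_def by blast+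
  have M: "\<And>x. mu n x \<le> mu (Suc n) x" by (rule mono1)
  have LV: "\<And>x. LVf (Suc n) x = (if evnode nd (fst (tr ! n)) = x then evreq (fst (tr ! n)) else LVf n x)"
    using n by simp
  have muu: "mu (Suc n) (evnode nd (fst (tr ! n))) = min (pos (evreq (fst (tr ! n)))) c"
    using n unfolding mu_def by simp
  have muo: "\<And>x. x \<noteq> evnode nd (fst (tr ! n)) \<Longrightarrow> mu (Suc n) x = mu n x"
    using LV unfolding mu_def by simp
  show ?thesis
    using step_cases[OF st]
  proof (elim disjE exE conjE)
    fix g assume e: "fst (tr ! n) = Issue g" and sk: "lnk (S n) (nd g) = nd g"
      and s': "S (Suc n) = (S n)\<lparr>prd := (prd (S n))(g := lst (S n) (nd g)), lst := (lst (S n))(nd g := Some g)\<rparr>"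
    show ?thesis unfolding CInv_def
    proof (intro conjI ballI allI impI)
      fix x assume "x \<in> V" "lnk (S (Suc n)) x = x"
      then show "\<exists>l'. lst (S (Suc n)) x = Some l' \<and> pos (LVf (Suc n) x) \<le> pos l'"
        using C1 s' LV e by auto
    next
      fix x assume x: "x \<in> V" "lnk (S (Suc n)) x \<noteq> x"
      then have "x \<noteq> nd g" using s' sk by auto
      then show "mu (Suc n) x \<le> mu (Suc n) (lnk (S (Suc n)) x)"
        using C2 x s' muo[of x] e M[of "lnk (S n) x"] by auto
    next
      fix r a y t assume "msgs (S (Suc n)) r = Some (a, y, t)"
      then have "msgs (S n) r = Some (a, y, t)" using s' by simp
      then show "min (pos r) c \<le> mu (Suc n) a" using C3 M[of a] le_trans by blast
    qed
  next
    fix g assume e: "fst (tr ! n) = Issue g" and sk: "lnk (S n) (nd g) \<noteq> nd g"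
      and s': "S (Suc n) = (S n)\<lparr>msgs := (msgs (S n))(g := Some (nd g, lnk (S n) (nd g), snd (tr ! n))),
                 lnk := (lnk (S n))(nd g := nd g), lst := (lst (S n))(nd g := Some g)\<rparr>"
    show ?thesis unfolding CInv_def
    proof (intro conjI ballI allI impI)
      fix x assume "x \<in> V" "lnk (S (Suc n)) x = x"
      then show "\<exists>l'. lst (S (Suc n)) x = Some l' \<and> pos (LVf (Suc n) x) \<le> pos l'"
        using C1 s' LV e by auto
    next
      fix x assume x: "x \<in> V" "lnk (S (Suc n)) x \<noteq> x"
      then have "x \<noteq> nd g" using s' by auto
      then show "mu (Suc n) x \<le> mu (Suc n) (lnk (S (Suc n)) x)"
        using C2 x s' muo[of x] e M[of "lnk (S n) x"] by auto
    next
      fix r a y t assume m: "msgs (S (Suc n)) r = Some (a, y, t)"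
      show "min (pos r) c \<le> mu (Suc n) a"
      proof (cases "r = g")
        case True
        then show ?thesis using m s' muu e by auto
      next
        case False
        then have "msgs (S n) r = Some (a, y, t)" using s' m by simp
        then show ?thesis using C3 M[of a] le_trans by blast
      qed
    qed
  next
    fix g w u t0 assume e: "fst (tr ! n) = Recv g w u" and mg: "msgs (S n) g = Some (w, u, t0)"
      and sk: "lnk (S n) u = u"
      and s': "S (Suc n) = (S n)\<lparr>prd := (prd (S n))(g := lst (S n) u), lnk := (lnk (S n))(u := w),
                 msgs := (msgs (S n))(g := None)\<rparr>"
    have Ewu: "E w u" using I(2) mg by blast
    have wu: "w \<noteq> u" using edge[OF Ewu] by auto
    have gw: "min (pos g) c \<le> mu n w" using C3 mg by blast
    show ?thesis unfolding CInv_def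
    proof (intro conjI ballI allI impI)
      fix x assume "x \<in> V" "lnk (S (Suc n)) x = x"
      then show "\<exists>l'. lst (S (Suc n)) x = Some l' \<and> pos (LVf (Suc n) x) \<le> pos l'"
        using C1 s' LV e wu by (auto split: if_splits)
    next
      fix x assume x: "x \<in> V" "lnk (S (Suc n)) x \<noteq> x"
      show "mu (Suc n) x \<le> mu (Suc n) (lnk (S (Suc n)) x)"
      proof (cases "x = u")
        case True
        then show ?thesis using s' muu muo[of w] wu e gw by auto
      next
        case False
        then show ?thesis using C2 x s' muo[of x] e M[of "lnk (S n) x"] by auto
      qed
    next
      fix r a y t assume "msgs (S (Suc n)) r = Some (a, y, t)"
      then have "msgs (S n) r = Some (a, y, t)" using s' by (auto split: if_splits)
      then show "min (pos r) c \<le> mu (Suc n) a" using C3 M[of a] le_trans by blast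
    qed
  next
    fix g w u t0 assume e: "fst (tr ! n) = Recv g w u" and mg: "msgs (S n) g = Some (w, u, t0)"
      and sk: "lnk (S n) u \<noteq> u"
      and s': "S (Suc n) = (S n)\<lparr>msgs := (msgs (S n))(g := Some (u, lnk (S n) u, snd (tr ! n))),
                 lnk := (lnk (S n))(u := w)\<rparr>"
    have Ewu: "E w u" using I(2) mg by blast
    have wu: "w \<noteq> u" using edge[OF Ewu] by auto
    have gw: "min (pos g) c \<le> mu n w" using C3 mg by blast
    show ?thesis unfolding CInv_def
    proof (intro conjI ballI allI impI)
      fix x assume "x \<in> V" "lnk (S (Suc n)) x = x"
      then show "\<exists>l'. lst (S (Suc n)) x = Some l' \<and> pos (LVf (Suc n) x) \<le> pos l'"
        using C1 s' LV e wu by (auto split: if_splits)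
    next
      fix x assume x: "x \<in> V" "lnk (S (Suc n)) x \<noteq> x"
      show "mu (Suc n) x \<le> mu (Suc n) (lnk (S (Suc n)) x)"
      proof (cases "x = u")
        case True
        then show ?thesis using s' muu muo[of w] wu e gw by auto
      next
        case False
        then show ?thesis using C2 x s' muo[of x] e M[of "lnk (S n) x"] by auto
      qed
    next
      fix r a y t assume m: "msgs (S (Suc n)) r = Some (a, y, t)"
      show "min (pos r) c \<le> mu (Suc n) a"
      proof (cases "r = g")
        case True
        then show ?thesis using m s' muu e by auto
      next
        case False
        then have "msgs (S n) r = Some (a, y, t)" using s' m by simp
        then show ?thesis using C3 M[of a] le_trans by blast
      qed
    qed
  qed
qed

lemma CInv_S: "n \<le> length tr \<Longrightarrow> CInv n"
  by (induction n) (auto simp: CInv0 CInv_step)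


lemma claimB:
  assumes "msgs (S n) g = Some (a, y, t)" "n \<le> length tr" "pos g = c"
  shows "mu n y < c"
  using assms
proof (induction "length tr - n" arbitrary: n a y t rule: less_induct)
  case less
  obtain m where m: "n \<le> m" "m < length tr" "fst (tr ! m) = Recv g a y" "msgs (S m) g = Some (a, y, t)"
    using arrival[OF less(3) less(2)] by blast
  note I = Inv_unfold[OF Inv_S[OF less_imp_le[OF m(2)]]]
  have Eay: "E a y" and gR: "g \<in> R - {r0}" using I(2) m(4) by auto
  have yV: "y \<in> V" using edge[OF Eay] by auto
  note st = S_step'[OF m(2)]
  have C: "CInv m" using CInv_S m by simp
  have mon: "mu n y \<le> mu m y" using mono m by simp
  show ?case
  proof (cases "lnk (S m) y = y")
    case True
    obtain l' where l': "lst (S m) y = Some l'" "pos (LVf m y) \<le> pos l'"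
      using C True yV unfolding CInv_def by blast
    have s': "prd (S (Suc m)) g = Some l' \<and> msgs (S (Suc m)) g = None"
      using step_cases[OF st] m(3) m(4) True l' by auto
    have "\<exists>q\<le>m. fst (tr ! q) = Issue g" using msgs_issued[of m g] m less_imp_le by fastforce
    then have "prd sf g = Some l'" using prd_stable[of m g] s' m by simp
    then have "pos g \<ge> 1 \<and> pos l' = pos g - 1" using pos_prd gR by blast
    then show ?thesis using mon l' less(4) unfolding mu_def by linarith
  next
    case False
    define z where "z = lnk (S m) y"
    have s': "msgs (S (Suc m)) g = Some (y, z, snd (tr ! m))"
      using step_cases[OF st] m(3) m(4) False unfolding z_def by auto
    have "mu (Suc m) z < c"
      using less(1)[of "Suc m" y z "snd (tr ! m)"] s' m less(4) by simp
    moreover have "z \<noteq> y" using False z_def by simp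
    then have "mu (Suc m) z = mu m z" using m(2,3) unfolding mu_def by simp
    moreover have "mu m y \<le> mu m z" using C False yV unfolding CInv_def z_def by blast
    ultimately show ?thesis using mon by linarith
  qed
qed

lemma claimA:
  assumes q: "q < length tr" and pg: "pos (evreq (fst (tr ! q))) = c"
  shows "pos (LVf q (evnode nd (fst (tr ! q)))) < c"
proof (cases "fst (tr ! q)")
  case (Issue g)
  let ?x = "nd g"
  note I = Inv_unfold[OF Inv_S[OF less_imp_le[OF q]]]
  have gR: "g \<in> R - {r0}" using issR' q Issue by blast
  have xV: "?x \<in> V" using gR ndV by blast
  note st = S_step'[OF q]
  have C: "CInv q" using CInv_S q by simp
  show ?thesis
  proof (cases "lnk (S q) ?x = ?x")
    case True
    obtain l' where l': "lst (S q) ?x = Some l'" "pos (LVf q ?x) \<le> pos l'"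
      using C True xV unfolding CInv_def by blast
    have m0: "msgs (S q) g = None"
    proof (rule ccontr)
      assume "msgs (S q) g \<noteq> None"
      then obtain q' where "q' < q" "fst (tr ! q') = Issue g" using msgs_issued[of q g] q by auto
      then show False using iss_unique[of q' g q] q Issue by simp
    qed
    have s': "prd (S (Suc q)) g = Some l' \<and> msgs (S (Suc q)) g = None"
      using step_cases[OF st] Issue True l' m0 by auto
    have "prd sf g = Some l'" using prd_stable[of q g] s' q Issue by auto
    then have "pos g \<ge> 1 \<and> pos l' = pos g - 1" using pos_prd gR by blast
    then show ?thesis using l' pg Issue by auto
  next
    case False
    define z where "z = lnk (S q) ?x"
    have s': "msgs (S (Suc q)) g = Some (?x, z, snd (tr ! q))"
      using step_cases[OF st] Issue False unfolding z_def by auto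
    have "mu (Suc q) z < c" using claimB[OF s'] q pg Issue by simp
    moreover have "z \<noteq> ?x" using False z_def by simp
    then have "mu (Suc q) z = mu q z" using q Issue unfolding mu_def by simp
    moreover have "mu q ?x \<le> mu q z" using C False xV unfolding CInv_def z_def by blast
    ultimately show ?thesis using Issue unfolding mu_def by auto
  qed
next
  case (Recv g w u)
  have "\<exists>t0. msgs (S q) g = Some (w, u, t0)" using step_cases[OF S_step'[OF q]] Recv by auto
  then obtain t0 where "msgs (S q) g = Some (w, u, t0)" by blast
  then have "mu q u < c" using claimB q pg Recv by simp
  then show ?thesis using Recv unfolding mu_def by auto
qed


end

context ctx
begin

lemma A_all_aux: "\<forall>q<length tr. pos (evreq (fst (tr ! q))) < c \<longrightarrow>
                 pos (LVf q (evnode nd (fst (tr ! q)))) < pos (evreq (fst (tr ! q)))"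
proof (induction c)
  case 0
  then show ?case by simp
next
  case (Suc c)
  interpret cp: capped V E wt v0 l R r0 nd tm tr sf rs c
    by (intro capped.intro ctx_axioms capped_axioms.intro) (rule Suc.IH)
  show ?case
  proof (intro allI impI)
    fix q assume q: "q < length tr" "pos (evreq (fst (tr ! q))) < Suc c"
    show "pos (LVf q (evnode nd (fst (tr ! q)))) < pos (evreq (fst (tr ! q)))"
    proof (cases "pos (evreq (fst (tr ! q))) < c")
      case True
      then show ?thesis using Suc.IH q by blast
    next
      case False
      then have "pos (evreq (fst (tr ! q))) = c" using q by simp
      then show ?thesis using cp.claimA[OF q(1)] by simp
    qed
  qed
qed

lemma A_all: "q < length tr \<Longrightarrow> pos (LVf q (evnode nd (fst (tr ! q)))) < pos (evreq (fst (tr ! q)))"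
  using A_all_aux by blast

lemma LV_mono: "n \<le> n' \<Longrightarrow> pos (LVf n x) \<le> pos (LVf n' x)"
proof (induction n' rule: dec_induct)
  case (step m)
  then show ?case using A_all[of m] by (auto intro: le_trans less_imp_le)
qed simp


lemma walk_V: "walkE E ws \<Longrightarrow> ws \<noteq> [] \<Longrightarrow> hd ws \<in> V \<Longrightarrow> set ws \<subseteq> V"
proof
  fix x assume w: "walkE E ws" "ws \<noteq> []" "hd ws \<in> V" and x: "x \<in> set ws"
  then obtain k where k: "k < length ws" "ws ! k = x" by (metis in_set_conv_nth)
  show "x \<in> V"
  proof (cases k)
    case 0
    then show ?thesis using k w by (simp add: hd_conv_nth)
  next
    case (Suc j)
    then have "E (ws ! j) (ws ! k)" using w k unfolding walkE_def by auto
    then show ?thesis using edge k by blast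
  qed
qed

lemma walk_distinct: "walkE E ws \<Longrightarrow> nobt ws \<Longrightarrow> set ws \<subseteq> V \<Longrightarrow> distinct ws"
proof (induction ws)
  case Nil
  then show ?case by simp
next
  case (Cons a ws)
  have "walkE E ws" "nobt ws" "set ws \<subseteq> V" using Cons.prems walkE_tl nobt_tl by auto
  then have dws: "distinct ws" using Cons.IH by blast
  show ?case
  proof (cases ws)
    case Nil
    then show ?thesis by simp
  next
    fix b ws' assume Cons2: "ws = b # ws'"
    have "walkE E (a # b # ws')" using Cons.prems(1) Cons2 by simp
    then have Eab: "E a b" by (simp add: walkE_Cons2)
    have ab: "a \<noteq> b" and Eba: "E b a" using edge[OF Eab] by auto
    have "a \<notin> set ws"
    proof
      assume "a \<in> set ws"
      then obtain s where s: "s < length ws" "ws ! s = a" by (metis in_set_conv_nth)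
      have s0: "s \<noteq> 0" using s ab Cons2 by (cases s) auto
      have sp1: "spath V E (take (Suc s) ws) b a"
        unfolding spath_def
      proof (intro conjI)
        show "take (Suc s) ws \<noteq> []" using Cons2 by simp
        show "hd (take (Suc s) ws) = b" using Cons2 by simp
        show "last (take (Suc s) ws) = a" using s by (simp add: take_Suc_conv_app_nth)
        show "distinct (take (Suc s) ws)" using dws by simp
        show "set (take (Suc s) ws) \<subseteq> V" using Cons.prems(3) set_take_subset by fastforce
        show "\<forall>k. Suc k < length (take (Suc s) ws) \<longrightarrow> E (take (Suc s) ws ! k) (take (Suc s) ws ! Suc k)"
          using walkE_tl[OF Cons.prems(1)] unfolding walkE_def by auto
      qed
      have sp2: "spath V E [b, a] b a" unfolding spath_def using Eba ab edge[OF Eab] by auto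
      have bV: "b \<in> V" "a \<in> V" using edge[OF Eab] by auto
      have "take (Suc s) ws = [b, a]" using uniq[OF bV sp1 sp2] .
      then have "length (take (Suc s) ws) = 2" by simp
      then have "s = 1" using s by simp
      then have e2: "(a # ws) ! Suc (Suc 0) = a" using s by simp
      have "Suc (Suc 0) < length (a # ws)" using s \<open>s = 1\<close> by simp
      then have "(a # ws) ! 0 \<noteq> (a # ws) ! Suc (Suc 0)" using Cons.prems(2) unfolding nobt_def by blast
      then show False using e2 by simp
    qed
    then show ?thesis using dws by simp
  qed
qed

end



context ctx
begin

lemma walk_future:
  assumes "msgs (S n) g = Some (a, y, t)" "n \<le> length tr"
  shows "\<exists>ws l'. ws \<noteq> [] \<and> hd ws = y \<and> prd sf g = Some l' \<and> last ws = nd l' \<and>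
          walkE E (a # ws) \<and> nobt (a # ws) \<and>
          (\<forall>x\<in>set ws. \<exists>q<length tr. evreq (fst (tr ! q)) = g \<and> evnode nd (fst (tr ! q)) = x)"
  using assms
proof (induction "length tr - n" arbitrary: n a y t rule: less_induct)
  case less
  obtain m where m: "n \<le> m" "m < length tr" "fst (tr ! m) = Recv g a y" "msgs (S m) g = Some (a, y, t)"
    using arrival[OF less(3) less(2)] by blast
  note I = Inv_unfold[OF Inv_S[OF less_imp_le[OF m(2)]]]
  have Eay: "E a y" and lya: "lnk (S m) y \<noteq> a" using I(2) m(4) by blast+
  have yV: "y \<in> V" using edge[OF Eay] by auto
  note st = S_step'[OF m(2)]
  have vis: "\<exists>q<length tr. evreq (fst (tr ! q)) = g \<and> evnode nd (fst (tr ! q)) = y"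
    using m(2,3) by (intro exI[of _ m]) simp
  show ?case
  proof (cases "lnk (S m) y = y")
    case True
    obtain l' where l': "lst (S m) y = Some l'" using I(4) yV True by blast
    have ndl: "nd l' = y" using I(5) l' by blast
    have s': "prd (S (Suc m)) g = Some l' \<and> msgs (S (Suc m)) g = None"
      using step_cases[OF st] m(3) m(4) True l' by auto
    have "\<exists>q\<le>m. fst (tr ! q) = Issue g" using msgs_issued[of m g] m less_imp_le by fastforce
    then have pg: "prd sf g = Some l'" using prd_stable[of m g] s' m by simp
    have w: "walkE E [a, y]" using Eay walkE_Cons2 walkE_single by metis
    have nb: "nobt [a, y]" by (rule nobt_short) simp
    show ?thesis
      by (rule exI[of _ "[y]"], rule exI[of _ l']) (use pg ndl w nb vis in simp)
  next
    case False
    define z where "z = lnk (S m) y"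
    have s': "msgs (S (Suc m)) g = Some (y, z, snd (tr ! m))"
      using step_cases[OF st] m(3) m(4) False unfolding z_def by auto
    have dec: "length tr - Suc m < length tr - n" using m(1,2) by linarith
    have sm: "Suc m \<le> length tr" using m(2) by simp
    obtain ws l' where ws: "ws \<noteq> []" "hd ws = z" "prd sf g = Some l'" "last ws = nd l'"
      "walkE E (y # ws)" "nobt (y # ws)"
      "\<forall>x\<in>set ws. \<exists>q<length tr. evreq (fst (tr ! q)) = g \<and> evnode nd (fst (tr ! q)) = x"
      using less(1)[OF dec s' sm] by blast
    obtain ws'' where ws'': "ws = z # ws''" using ws(1,2) by (cases ws) auto
    have w: "walkE E (a # y # ws)" using Eay ws(5) walkE_Cons2 by metis
    have az: "a \<noteq> z" using lya z_def by simp
    have nb: "nobt (a # y # ws)" using ws(6) az ws'' nobt_Cons3 by metis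
    show ?thesis
      by (rule exI[of _ "y # ws"], rule exI[of _ l']) (use ws w nb vis in auto)
  qed
qed

lemma req_walk:
  assumes g: "g \<in> R - {r0}"
  shows "\<exists>ws l'. ws \<noteq> [] \<and> hd ws = nd g \<and> prd sf g = Some l' \<and> last ws = nd l' \<and>
          walkE E ws \<and> nobt ws \<and>
          (\<forall>x\<in>set ws. \<exists>q<length tr. evreq (fst (tr ! q)) = g \<and> evnode nd (fst (tr ! q)) = x)"
proof -
  have "card {k. k < length tr \<and> fst (tr ! k) = Issue g} = 1" using issc g by blast
  then have "{k. k < length tr \<and> fst (tr ! k) = Issue g} \<noteq> {}" by (metis card.empty zero_neq_one)
  then obtain q where q: "q < length tr" "fst (tr ! q) = Issue g" by blast
  let ?x = "nd g"
  note I = Inv_unfold[OF Inv_S[OF less_imp_le[OF q(1)]]]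
  have xV: "?x \<in> V" using g ndV by blast
  note st = S_step'[OF q(1)]
  have vis: "\<exists>q<length tr. evreq (fst (tr ! q)) = g \<and> evnode nd (fst (tr ! q)) = ?x"
    using q by (intro exI[of _ q]) simp
  have m0: "msgs (S q) g = None"
  proof (rule ccontr)
    assume "msgs (S q) g \<noteq> None"
    then obtain q' where "q' < q" "fst (tr ! q') = Issue g" using msgs_issued[of q g] q by auto
    then show False using iss_unique[of q' g q] q by simp
  qed
  show ?thesis
  proof (cases "lnk (S q) ?x = ?x")
    case True
    obtain l' where l': "lst (S q) ?x = Some l'" using I(4) xV True by blast
    have ndl: "nd l' = ?x" using I(5) l' by blast
    have s': "prd (S (Suc q)) g = Some l' \<and> msgs (S (Suc q)) g = None"
      using step_cases[OF st] q True l' m0 by auto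
    have pg: "prd sf g = Some l'" using prd_stable[of q g] s' q by auto
    show ?thesis
      by (rule exI[of _ "[?x]"], rule exI[of _ l']) (use pg ndl vis walkE_single[of E "nd g"] nobt_short[of "[nd g]"] in simp)
  next
    case False
    define z where "z = lnk (S q) ?x"
    have s': "msgs (S (Suc q)) g = Some (?x, z, snd (tr ! q))"
      using step_cases[OF st] q False unfolding z_def by auto
    obtain ws l' where ws: "ws \<noteq> []" "hd ws = z" "prd sf g = Some l'" "last ws = nd l'"
      "walkE E (?x # ws)" "nobt (?x # ws)"
      "\<forall>x\<in>set ws. \<exists>q<length tr. evreq (fst (tr ! q)) = g \<and> evnode nd (fst (tr ! q)) = x"
      using walk_future[OF s'] q by auto
    show ?thesis
      by (rule exI[of _ "?x # ws"], rule exI[of _ l']) (use ws vis in auto)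
  qed
qed

end



theorem lemma12:
  fixes V :: "'v set" and E :: "'v \<Rightarrow> 'v \<Rightarrow> bool" and wt :: "'v \<Rightarrow> 'v \<Rightarrow> real"
    and v0 :: 'v and l :: "'v \<Rightarrow> 'v"
    and R :: "'r set" and r0 :: 'r and nd :: "'r \<Rightarrow> 'v" and tm :: "'r \<Rightarrow> real"
    and tr :: "(('r, 'v) event \<times> real) list" and sf :: "('v, 'r) st"
    and rs :: "nat \<Rightarrow> 'r" and i :: nat and p :: "'v list" and k :: nat
  assumes exec: "arrow_exec V E wt v0 l R r0 nd tm tr sf"
    and order: "bij_betw rs {0..<card R} R" "rs 0 = r0"
      "\<forall>j\<in>{1..<card R}. prd sf (rs j) = Some (rs (j - 1))"
    and i: "1 \<le> i" "i < card R"
    and path: "spath V E p (nd (rs i)) (nd (rs (i - 1)))"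
    and k: "k < length p"
  shows "\<exists>q < length tr. visits nd (fst (tr ! q)) (rs i) (p ! k) \<and>
           (\<forall>j q'. i < j \<and> j < card R \<and> q' < length tr \<and>
                   visits nd (fst (tr ! q')) (rs j) (p ! k) \<longrightarrow> q < q')"
proof -
  interpret ctx V E wt v0 l R r0 nd tm tr sf rs
    by (rule ctx.intro[OF exec order(1) order(2) order(3)])
  let ?g = "rs i"
  have inj: "inj_on rs {0..<card R}" using order(1) by (simp add: bij_betw_def)
  have gR: "?g \<in> R" using order(1) i by (auto simp: bij_betw_def)
  have "?g \<noteq> r0"
  proof
    assume "?g = r0"
    then have "rs i = rs 0" using order(2) by simp
    then have "i = 0" using inj i inj_onD[of rs "{0..<card R}" i 0] by simp
    then show False using i by simp
  qed
  then have gR': "?g \<in> R - {r0}" using gR by simp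
  obtain ws l' where ws: "ws \<noteq> []" "hd ws = nd ?g" "prd sf ?g = Some l'" "last ws = nd l'"
      "walkE E ws" "nobt ws"
      "\<forall>x\<in>set ws. \<exists>q<length tr. evreq (fst (tr ! q)) = ?g \<and> evnode nd (fst (tr ! q)) = x"
    using req_walk[OF gR'] by blast
  have "prd sf ?g = Some (rs (i - 1))" using order(3) i by simp
  then have l': "l' = rs (i - 1)" using ws(3) by simp
  have gV: "nd ?g \<in> V" using ndV gR by blast
  have sV: "set ws \<subseteq> V" using walk_V[OF ws(5) ws(1)] ws(2) gV by simp
  have d: "distinct ws" using walk_distinct[OF ws(5) ws(6) sV] .
  have sp: "spath V E ws (nd ?g) (nd (rs (i - 1)))"
    unfolding spath_def using ws(1,2,4,5) d sV l' unfolding walkE_def by simp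
  have hV: "nd (rs (i - 1)) \<in> V"
    using sV ws(1,4) l' by (metis last_in_set subsetD)
  have "ws = p" using uniq[OF gV hV sp path] .
  then have "p ! k \<in> set ws" using k by simp
  then obtain q where q: "q < length tr" "evreq (fst (tr ! q)) = ?g" "evnode nd (fst (tr ! q)) = p ! k"
    using ws(7) by blast
  show ?thesis
  proof (intro exI[of _ q] conjI allI impI)
    show "q < length tr" using q by simp
    show "visits nd (fst (tr ! q)) (rs i) (p ! k)" using q by (simp add: visits_iff)
  next
    fix j q' assume a: "i < j \<and> j < card R \<and> q' < length tr \<and> visits nd (fst (tr ! q')) (rs j) (p ! k)"
    then have q': "q' < length tr" "evreq (fst (tr ! q')) = rs j" "evnode nd (fst (tr ! q')) = p ! k"
      by (auto simp: visits_iff)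
    have pj: "pos (rs j) = j" using pos_rs a by simp
    have pi: "pos (rs i) = i" using pos_rs i by simp
    show "q < q'"
    proof (rule ccontr)
      assume "\<not> q < q'"
      then have "q' \<le> q" by simp
      moreover have "q' \<noteq> q"
      proof
        assume "q' = q"
        then have "rs j = rs i" using q q' by simp
        then have "i = j" using pi pj by simp
        then show False using a by simp
      qed
      ultimately have lt: "Suc q' \<le> q" by simp
      have "LVf (Suc q') (p ! k) = rs j" using q' by simp
      then have "j \<le> pos (LVf q (p ! k))" using LV_mono[OF lt, of "p ! k"] pj by simp
      moreover have "pos (LVf q (p ! k)) < i" using A_all[OF q(1)] q pi by simp
      ultimately show False using a by simp
    qed
  qed
qed


end
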